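(* Let $T\in\mathbb{R}^{d\times d\times d}$ have nonnegative entries, let $C^{(1)}_{1},\ldots,C^{(1)}_{d}$ and $C^{(2)}_{1},\ldots,C^{(2)}_{d}$ be $r\times r$ real symmetric positive definite matrices, fix $i_3\in[d]$, and let $\mathcal{A}:\mathbb{S}^r\to\mathbb{R}^{d^2}$ be $X\mapsto(\langle X,C^{(1)}_{i_1}\circ C^{(2)}_{i_2}\rangle)_{i_1,i_2\in[d]}$. Let $t=\operatorname{vec}(T_{::i_3})=(T_{i_1i_2i_3})_{i_1,i_2}$. Then $\mathcal{A}^\top t=\sum_{i_1,i_2}T_{i_1i_2i_3}C^{(1)}_{i_1}\circ C^{(2)}_{i_2}$ is positive semidefinite, and for every positive definite $C_{\mathrm{old}}$ the update $C_{\mathrm{new}}=W(\mathcal{A}^\top t)W$, $W=([\mathcal{A}^\top\mathcal{A}](C_{\mathrm{old}}))^{-1}\#C_{\mathrm{old}}$, yields a positive semidefinite matrix satisfying $\|t-\mathcal{A}(C_{\mathrm{new}})\|_2^2\le\|t-\mathcal{A}(C_{\mathrm{old}})\|_2^2$.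
   Context: $\circ$ denotes the Schur (entrywise) product of matrices, $\langle Y,Z\rangle=\operatorname{tr}(YZ)$ on the space $\mathbb{S}^r$ of $r\times r$ real symmetric matrices. The adjoint is $\mathcal{A}^\top(y)=\sum_{i_1,i_2}y_{i_1i_2}C^{(1)}_{i_1}\circ C^{(2)}_{i_2}$ and $[\mathcal{A}^\top\mathcal{A}](Z)=\mathcal{A}^\top(\mathcal{A}(Z))$. For positive definite $C,D$, $C\# D=C^{1/2}(C^{-1/2}DC^{-1/2})^{1/2}C^{1/2}$ is the matrix geometric mean. *)

theory Defs
  imports "HOL-Analysis.Analysis"
begin

text \<open>Real r x r matrices are modelled as real^'r^'r for a finite index type 'r;
  the index set [d] is a finite type 'd.\<close>

definition sym_mat :: "real^'r^'r \<Rightarrow> bool" where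
  "sym_mat M \<longleftrightarrow> transpose M = M"

definition psd_mat :: "real^'r^'r \<Rightarrow> bool" where
  "psd_mat M \<longleftrightarrow> sym_mat M \<and> (\<forall>x. 0 \<le> x \<bullet> (M *v x))"

definition pd_mat :: "real^'r^'r \<Rightarrow> bool" where
  "pd_mat M \<longleftrightarrow> sym_mat M \<and> (\<forall>x. x \<noteq> 0 \<longrightarrow> 0 < x \<bullet> (M *v x))"

definition schur :: "real^'r^'r \<Rightarrow> real^'r^'r \<Rightarrow> real^'r^'r" where
  "schur A B = (\<chi> i j. A $ i $ j * B $ i $ j)"

definition tr_inner :: "real^'r^'r \<Rightarrow> real^'r^'r \<Rightarrow> real" where
  "tr_inner Y Z = trace (Y ** Z)"

definition Aop :: "('d \<Rightarrow> real^'r^'r) \<Rightarrow> ('d \<Rightarrow> real^'r^'r) \<Rightarrow> real^'r^'r \<Rightarrow> ('d \<Rightarrow> 'd \<Rightarrow> real)" where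
  "Aop C1 C2 X = (\<lambda>i1 i2. tr_inner X (schur (C1 i1) (C2 i2)))"

definition Aadj :: "('d::finite \<Rightarrow> real^'r^'r) \<Rightarrow> ('d \<Rightarrow> real^'r^'r) \<Rightarrow> ('d \<Rightarrow> 'd \<Rightarrow> real) \<Rightarrow> real^'r^'r" where
  "Aadj C1 C2 y = (\<Sum>i1\<in>UNIV. \<Sum>i2\<in>UNIV. y i1 i2 *\<^sub>R schur (C1 i1) (C2 i2))"

definition sqnorm2 :: "('d::finite \<Rightarrow> 'd \<Rightarrow> real) \<Rightarrow> real" where
  "sqnorm2 v = (\<Sum>i1\<in>UNIV. \<Sum>i2\<in>UNIV. (v i1 i2)^2)"

definition msqrt :: "real^'r^'r \<Rightarrow> real^'r^'r" where
  "msqrt M = (THE S. psd_mat S \<and> S ** S = M)"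

definition gmean :: "real^'r^'r \<Rightarrow> real^'r^'r \<Rightarrow> real^'r^'r" where
  "gmean C D = (let Ch = msqrt C; Chi = matrix_inv Ch in Ch ** msqrt (Chi ** D ** Chi) ** Ch)"

end

theory Submission
  imports Defs
begin


lemma sym_dot:
  fixes A :: "real^'n^'n"
  assumes "transpose A = A" shows "x \<bullet> (A *v y) = (A *v x) \<bullet> y"
  by (metis assms dot_lmul_matrix transpose_matrix_vector)

lemma quad_zero:
  fixes a b :: real
  assumes h: "\<And>t. 0 \<le> 2*t*a + t^2*b" shows "a = 0"
proof (rule ccontr)
  assume a0: "a \<noteq> 0"
  define c where "c = \<bar>b\<bar> + 1"
  have c0: "c > 0" unfolding c_def by simp
  define t where "t = - a / c"
  have "2*t*a + t^2*b = (-2*a^2*c + a^2*b) / c^2"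
    unfolding t_def using c0 by (simp add: field_simps power2_eq_square)
  also have "\<dots> < 0"
  proof -
    have "a^2 > 0" using a0 by simp
    have "a^2*b \<le> a^2*\<bar>b\<bar>" using \<open>a^2>0\<close> by (simp add: mult_left_mono)
    have "0 \<le> a^2*\<bar>b\<bar>" by simp
    have e: "-2*a^2*c + a^2*b = -2*(a^2*\<bar>b\<bar>) - 2*a^2 + a^2*b" unfolding c_def by (simp add: algebra_simps)
    have "-2*a^2*c + a^2*b < 0" unfolding e using \<open>a^2>0\<close> \<open>0 \<le> a^2*\<bar>b\<bar>\<close> \<open>a^2*b \<le> a^2*\<bar>b\<bar>\<close> by linarith
    thus ?thesis using c0 by (simp add: divide_neg_pos)
  qed
  finally show False using h[of t] by linarith
qed

lemma eig_exists:
  fixes A :: "real^'n^'n"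
  assumes sym: "transpose A = A" and S: "subspace S" and inv: "\<And>x. x \<in> S \<Longrightarrow> A *v x \<in> S"
    and x0: "x0 \<in> S" "x0 \<noteq> 0"
  shows "\<exists>v\<in>S. norm v = 1 \<and> A *v v = (v \<bullet> (A *v v)) *\<^sub>R v"
proof -
  let ?K = "S \<inter> sphere 0 1"
  have cK: "compact ?K" using closed_subspace[OF S] compact_sphere by (simp add: closed_Int_compact)
  have "x0 /\<^sub>R norm x0 \<in> ?K" using x0 S by (simp add: subspace_scale)
  hence neK: "?K \<noteq> {}" by blast
  have cont: "continuous_on ?K (\<lambda>y. y \<bullet> (A *v y))"
    by (intro continuous_intros linear_continuous_on bounded_linear.linear matrix_vector_mul_bounded_linear)
      (simp add: bounded_linear.continuous_on continuous_on_id)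
  obtain u where u: "u \<in> ?K" and umax: "\<And>y. y \<in> ?K \<Longrightarrow> y \<bullet> (A *v y) \<le> u \<bullet> (A *v u)"
    using continuous_attains_sup[OF cK neK cont] by blast
  define mu where "mu = u \<bullet> (A *v u)"
  have uS: "u \<in> S" and un: "norm u = 1" using u by auto
  have gen: "y \<bullet> (A *v y) \<le> mu * (norm y)^2" if yS: "y \<in> S" for y
  proof (cases "y = 0")
    case True thus ?thesis by simp
  next
    case False
    define z where "z = y /\<^sub>R norm y"
    have "z \<in> ?K" unfolding z_def using False yS S by (simp add: subspace_scale)
    hence "z \<bullet> (A *v z) \<le> mu" using umax mu_def by blast
    moreover have "z \<bullet> (A *v z) = (y \<bullet> (A *v y)) / (norm y)^2"
      unfolding z_def by (simp add: matrix_vector_mult_scaleR power2_eq_square divide_inverse)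
    ultimately show ?thesis using False by (simp add: divide_le_eq mult.commute)
  qed
  define w where "w = A *v u - mu *\<^sub>R u"
  have wS: "w \<in> S" unfolding w_def using inv[OF uS] uS S by (simp add: subspace_diff subspace_scale)
  have uu: "u \<bullet> u = 1" using un by (simp add: dot_square_norm)
  have "u \<bullet> w = u \<bullet> (A *v u) - mu * (u \<bullet> u)" unfolding w_def by (simp only: inner_diff_right inner_scaleR_right)
  hence uw: "u \<bullet> w = 0" using uu mu_def by simp
  have Au: "A *v u = w + mu *\<^sub>R u" unfolding w_def by simp
  have wAu: "w \<bullet> (A *v u) = w \<bullet> w"
    unfolding Au using uw by (simp add: inner_add_right inner_commute)
  have key: "0 \<le> 2*t*(- (w \<bullet> w)) + t^2 * (mu * (w \<bullet> w) - w \<bullet> (A *v w))" for t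
  proof -
    have yS: "u + t *\<^sub>R w \<in> S" using uS wS S by (simp add: subspace_add subspace_scale)
    have "(u + t *\<^sub>R w) \<bullet> (A *v (u + t *\<^sub>R w)) = mu + 2*t*(w \<bullet> w) + t^2 * (w \<bullet> (A *v w))"
    proof -
      have "u \<bullet> (A *v w) = w \<bullet> w" using sym_dot[OF sym, of u w] wAu by (simp add: inner_commute)
      thus ?thesis using wAu
        by (simp add: matrix_vector_right_distrib matrix_vector_mult_scaleR inner_add_left inner_add_right
            mu_def power2_eq_square algebra_simps)
    qed
    moreover have "(norm (u + t *\<^sub>R w))^2 = 1 + t^2 * (w \<bullet> w)"
      apply (simp only: power2_norm_eq_inner)
      using uu uw by (simp add: inner_add_left inner_add_right inner_commute power2_eq_square algebra_simps)
    ultimately have "mu + 2*t*(w \<bullet> w) + t^2 * (w \<bullet> (A *v w)) \<le> mu * (1 + t^2 * (w \<bullet> w))"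
      using gen[OF yS] by simp
    thus ?thesis by (simp add: algebra_simps)
  qed
  have "- (w \<bullet> w) = 0" by (rule quad_zero[OF key])
  hence "w = 0" by simp
  hence "A *v u = mu *\<^sub>R u" unfolding w_def by simp
  thus ?thesis using uS un mu_def by blast
qed

lemma mv_sum: "(A::real^'n^'m) *v (\<Sum>v\<in>B. f v) = (\<Sum>v\<in>B. A *v f v)"
  by (induction B rule: infinite_finite_induct) (simp_all add: matrix_vector_right_distrib)

definition eigsys :: "real^'n^'n \<Rightarrow> (real^'n) set \<Rightarrow> bool" where
  "eigsys A B \<longleftrightarrow> finite B \<and> card B = CARD('n) \<and> pairwise orthogonal B \<and>
     (\<forall>v\<in>B. norm v = 1 \<and> A *v v = (v \<bullet> (A *v v)) *\<^sub>R v)"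

lemma spectral_aux:
  fixes A :: "real^'n^'n"
  assumes sym: "transpose A = A"
  shows "k \<le> CARD('n) \<Longrightarrow> \<exists>B. finite B \<and> card B = k \<and> pairwise orthogonal B \<and>
     (\<forall>v\<in>B. norm v = 1 \<and> A *v v = (v \<bullet> (A *v v)) *\<^sub>R v)"
proof (induction k)
  case 0 show ?case by (auto intro!: exI[of _ "{}"])
next
  case (Suc k)
  then obtain B where B: "finite B" "card B = k" "pairwise orthogonal B"
     "\<forall>v\<in>B. norm v = 1 \<and> A *v v = (v \<bullet> (A *v v)) *\<^sub>R v" by auto
  have "dim B < DIM(real^'n)" using dim_le_card[of B B] B Suc.prems by (simp add: span_superset)
  then obtain x where x: "x \<noteq> 0" "\<And>y. y \<in> span B \<Longrightarrow> orthogonal x y"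
    using orthogonal_to_subspace_exists by blast
  define S where "S = {x. \<forall>v\<in>B. v \<bullet> x = 0}"
  have subS: "subspace S" unfolding S_def subspace_def by (auto simp: inner_add_right)
  have xS: "x \<in> S" unfolding S_def using x(2) span_base by (force simp: orthogonal_def inner_commute)
  have invS: "A *v y \<in> S" if "y \<in> S" for y
  proof -
    have "v \<bullet> (A *v y) = 0" if v: "v \<in> B" for v
    proof -
      have "v \<bullet> (A *v y) = (A *v v) \<bullet> y" by (rule sym_dot[OF sym])
      also have "\<dots> = (v \<bullet> (A *v v)) * (v \<bullet> y)" using B(4) v by (metis inner_scaleR_left)
      also have "\<dots> = 0" using \<open>y \<in> S\<close> v unfolding S_def by simp
      finally show ?thesis .
    qed
    thus ?thesis unfolding S_def by blast
  qed
  obtain u where u: "u \<in> S" "norm u = 1" "A *v u = (u \<bullet> (A *v u)) *\<^sub>R u"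
    using eig_exists[OF sym subS invS xS x(1)] by blast
  have uB: "u \<notin> B"
  proof
    assume "u \<in> B"
    hence "u \<bullet> u = 0" using u(1) unfolding S_def by blast
    thus False using u(2) by simp
  qed
  show ?case
  proof (rule exI[of _ "insert u B"], intro conjI)
    show "finite (insert u B)" using B by simp
    show "card (insert u B) = Suc k" using B uB by simp
    show "pairwise orthogonal (insert u B)"
      using B(3) u(1) unfolding S_def
      by (auto simp: pairwise_insert orthogonal_def inner_commute)
    show "\<forall>v\<in>insert u B. norm v = 1 \<and> A *v v = (v \<bullet> (A *v v)) *\<^sub>R v" using B u by auto
  qed
qed

lemma spectral:
  fixes A :: "real^'n^'n"
  assumes sym: "transpose A = A"
  shows "\<exists>B. eigsys A B"
  using spectral_aux[OF sym, of "CARD('n)"] unfolding eigsys_def by auto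

lemma eigsys_span:
  fixes A :: "real^'n^'n"
  assumes "eigsys A B" shows "span B = UNIV"
proof -
  have "0 \<notin> B" using assms unfolding eigsys_def by force
  hence ind: "independent B"
    using assms unfolding eigsys_def by (intro pairwise_orthogonal_independent) auto
  have "card B = dim (UNIV :: (real^'n) set)" using assms unfolding eigsys_def by simp
  hence "UNIV \<subseteq> span B" using card_eq_dim[of B UNIV] ind assms unfolding eigsys_def by simp
  thus ?thesis by auto
qed

lemma eigsys_inner:
  assumes "eigsys A B" "v \<in> B" "w \<in> B"
  shows "v \<bullet> w = (if v = w then 1 else 0)"
  using assms unfolding eigsys_def pairwise_def orthogonal_def
  by (auto simp: dot_square_norm)

lemma eigsys_expand:
  fixes A :: "real^'n^'n"
  assumes E: "eigsys A B"
  shows "x = (\<Sum>v\<in>B. (v \<bullet> x) *\<^sub>R v)"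
proof -
  have fin: "finite B" using E unfolding eigsys_def by simp
  define y where "y = x - (\<Sum>v\<in>B. (v \<bullet> x) *\<^sub>R v)"
  have orth: "orthogonal y w" if w: "w \<in> B" for w
  proof -
    have "w \<bullet> (\<Sum>v\<in>B. (v \<bullet> x) *\<^sub>R v) = (\<Sum>v\<in>B. (v \<bullet> x) * (w \<bullet> v))"
      by (simp add: inner_sum_right)
    also have "\<dots> = (\<Sum>v\<in>B. if v = w then (v \<bullet> x) else 0)"
      by (rule sum.cong) (auto simp: eigsys_inner[OF E w])
    also have "\<dots> = w \<bullet> x" using w fin by (simp add: sum.delta')
    finally show ?thesis unfolding y_def orthogonal_def by (simp add: inner_diff_right inner_commute)
  qed
  have "orthogonal y y" using orthogonal_to_span[of y B y] orth eigsys_span[OF E]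
    by (simp add: orthogonal_commute)
  hence "y = 0" by (simp add: orthogonal_def)
  thus ?thesis unfolding y_def by simp
qed

lemma eigsys_apply:
  fixes A :: "real^'n^'n"
  assumes E: "eigsys A B"
  shows "A *v x = (\<Sum>v\<in>B. ((v \<bullet> (A *v v)) * (v \<bullet> x)) *\<^sub>R v)"
proof -
  have "A *v x = A *v (\<Sum>v\<in>B. (v \<bullet> x) *\<^sub>R v)" using eigsys_expand[OF E, of x] by simp
  also have "\<dots> = (\<Sum>v\<in>B. (v \<bullet> x) *\<^sub>R (A *v v))"
    by (simp add: mv_sum matrix_vector_mult_scaleR)
  also have "\<dots> = (\<Sum>v\<in>B. ((v \<bullet> (A *v v)) * (v \<bullet> x)) *\<^sub>R v)"
  proof (rule sum.cong[OF refl])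
    fix v assume "v \<in> B"
    hence "A *v v = (v \<bullet> (A *v v)) *\<^sub>R v" using E unfolding eigsys_def by blast
    thus "(v \<bullet> x) *\<^sub>R (A *v v) = ((v \<bullet> (A *v v)) * (v \<bullet> x)) *\<^sub>R v" by (metis scaleR_scaleR mult.commute)
  qed
  finally show ?thesis .
qed



lemma outer_mv:
  fixes B :: "(real^'n) set"
  assumes "finite B"
  shows "(\<chi> i j. \<Sum>v\<in>B. c v * v$i * v$j) *v x = (\<Sum>v\<in>B. (c v * (v \<bullet> x)) *\<^sub>R v)"
proof -
  have "((\<chi> i j. \<Sum>v\<in>B. c v * v$i * v$j) *v x) $ i = (\<Sum>v\<in>B. (c v * (v \<bullet> x)) *\<^sub>R v) $ i" for i
  proof -
    have "((\<chi> i j. \<Sum>v\<in>B. c v * v$i * v$j) *v x) $ i = (\<Sum>j\<in>UNIV. \<Sum>v\<in>B. c v * v$i * v$j * x$j)"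
      by (simp add: matrix_vector_mult_def sum_distrib_right)
    also have "\<dots> = (\<Sum>v\<in>B. \<Sum>j\<in>UNIV. c v * v$i * v$j * x$j)" by (rule sum.swap)
    also have "\<dots> = (\<Sum>v\<in>B. (c v * (v \<bullet> x)) * v$i)"
    proof (rule sum.cong[OF refl])
      fix v
      have "(\<Sum>j\<in>UNIV. c v * v$i * v$j * x$j) = (\<Sum>j\<in>UNIV. (c v * v$i) * (v$j * x$j))"
        by (simp add: mult.assoc)
      also have "\<dots> = (c v * v$i) * (v \<bullet> x)" by (simp add: inner_vec_def inner_real_def sum_distrib_left)
      finally show "(\<Sum>j\<in>UNIV. c v * v$i * v$j * x$j) = (c v * (v \<bullet> x)) * v$i" by simp
    qed
    finally show ?thesis by simp
  qed
  thus ?thesis by (simp add: vec_eq_iff)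
qed

definition sqm :: "real^'n^'n \<Rightarrow> (real^'n) set \<Rightarrow> real^'n^'n" where
  "sqm A B = (\<chi> i j. \<Sum>v\<in>B. sqrt (v \<bullet> (A *v v)) * v$i * v$j)"

lemma psd_sym: "psd_mat M \<Longrightarrow> transpose M = M" by (simp add: psd_mat_def sym_mat_def)
lemma pd_sym: "pd_mat M \<Longrightarrow> transpose M = M" by (simp add: pd_mat_def sym_mat_def)
lemma psd_nonneg: "psd_mat M \<Longrightarrow> 0 \<le> x \<bullet> (M *v x)" by (simp add: psd_mat_def)
lemma pd_psd: "pd_mat M \<Longrightarrow> psd_mat M"
  unfolding pd_mat_def psd_mat_def by (metis inner_zero_left matrix_vector_mult_0_right order_le_less)

lemma sqm_apply:
  assumes E: "eigsys A B"
  shows "sqm A B *v x = (\<Sum>v\<in>B. (sqrt (v \<bullet> (A *v v)) * (v \<bullet> x)) *\<^sub>R v)"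
  unfolding sqm_def using E by (simp add: eigsys_def outer_mv)

lemma sqm_psd:
  assumes E: "eigsys A B" and nn: "\<And>v. v \<in> B \<Longrightarrow> 0 \<le> v \<bullet> (A *v v)"
  shows "psd_mat (sqm A B)"
  unfolding psd_mat_def sym_mat_def
proof
  show "transpose (sqm A B) = sqm A B"
    by (simp add: sqm_def transpose_def vec_eq_iff mult.commute mult.left_commute)
  show "\<forall>x. 0 \<le> x \<bullet> (sqm A B *v x)"
  proof
    fix x
    have "x \<bullet> (sqm A B *v x) = (\<Sum>v\<in>B. sqrt (v \<bullet> (A *v v)) * (v \<bullet> x)^2)"
      by (simp add: sqm_apply[OF E] inner_sum_right power2_eq_square inner_commute mult.assoc)
    also have "\<dots> \<ge> 0" using nn by (intro sum_nonneg) simp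
    finally show "0 \<le> x \<bullet> (sqm A B *v x)" .
  qed
qed

lemma eigsys_sum_inner:
  assumes E: "eigsys A B" and w: "w \<in> B"
  shows "w \<bullet> (\<Sum>v\<in>B. f v *\<^sub>R v) = f w"
proof -
  have fin: "finite B" using E unfolding eigsys_def by simp
  have "w \<bullet> (\<Sum>v\<in>B. f v *\<^sub>R v) = (\<Sum>v\<in>B. f v * (w \<bullet> v))" by (simp add: inner_sum_right)
  also have "\<dots> = (\<Sum>v\<in>B. if v = w then f v else 0)"
    by (rule sum.cong) (auto simp: eigsys_inner[OF E w])
  also have "\<dots> = f w" using w fin by simp
  finally show ?thesis .
qed

lemma sqm_sq:
  assumes E: "eigsys A B" and nn: "\<And>v. v \<in> B \<Longrightarrow> 0 \<le> v \<bullet> (A *v v)"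
  shows "sqm A B ** sqm A B = A"
proof -
  have "(sqm A B ** sqm A B) *v x = A *v x" for x
  proof -
    have "(sqm A B ** sqm A B) *v x = sqm A B *v (sqm A B *v x)" by (rule matrix_vector_mul_assoc[symmetric])
    also have "\<dots> = (\<Sum>w\<in>B. (sqrt (w \<bullet> (A *v w)) * (sqrt (w \<bullet> (A *v w)) * (w \<bullet> x))) *\<^sub>R w)"
      unfolding sqm_apply[OF E] by (rule sum.cong[OF refl]) (simp add: eigsys_sum_inner[OF E])
    also have "\<dots> = (\<Sum>w\<in>B. ((w \<bullet> (A *v w)) * (w \<bullet> x)) *\<^sub>R w)"
      by (rule sum.cong[OF refl]) (simp add: nn mult.assoc[symmetric])
    also have "\<dots> = A *v x" by (rule eigsys_apply[OF E, symmetric])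
    finally show ?thesis .
  qed
  thus ?thesis by (simp add: matrix_eq)
qed

lemma root_on_eig:
  fixes S A :: "real^'n^'n"
  assumes S: "psd_mat S" and SS: "S ** S = A" and v: "A *v v = l *\<^sub>R v" and l: "0 \<le> l"
  shows "S *v v = sqrt l *\<^sub>R v"
proof -
  define mu where "mu = sqrt l"
  have mu0: "0 \<le> mu" unfolding mu_def using l by simp
  have mul: "mu * mu = l" unfolding mu_def using l by simp
  define y where "y = S *v v - mu *\<^sub>R v"
  have SSv: "S *v (S *v v) = l *\<^sub>R v" using SS v matrix_vector_mul_assoc[of S S v] by simp
  have "S *v y = S *v (S *v v) - mu *\<^sub>R (S *v v)"
    unfolding y_def by (simp only: matrix_vector_mult_diff_distrib matrix_vector_mult_scaleR)
  also have "\<dots> = (mu * mu) *\<^sub>R v - mu *\<^sub>R (S *v v)" using SSv mul by simp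
  also have "\<dots> = - mu *\<^sub>R y" unfolding y_def by (simp add: scaleR_diff_right)
  finally have Sy: "S *v y = - mu *\<^sub>R y" .
  have yy: "y \<bullet> y = 0"
  proof (cases "mu = 0")
    case True
    have "y \<bullet> y = (S *v v) \<bullet> (S *v v)" unfolding y_def True by simp
    also have "\<dots> = v \<bullet> (S *v (S *v v))" using sym_dot[OF psd_sym[OF S]] by metis
    also have "\<dots> = 0" using SSv True mul by simp
    finally show ?thesis .
  next
    case False
    have "0 \<le> y \<bullet> (S *v y)" using S by (rule psd_nonneg)
    also have "\<dots> = - mu * (y \<bullet> y)" unfolding Sy by simp
    finally have "mu * (y \<bullet> y) \<le> 0" by simp
    hence "y \<bullet> y \<le> 0" using False mu0 by (simp add: mult_le_0_iff)
    thus ?thesis using inner_ge_zero[of y] by linarith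
  qed
  hence "y = 0" by simp
  thus ?thesis unfolding y_def mu_def by simp
qed

lemma root_unique_apply:
  fixes S A :: "real^'n^'n"
  assumes S: "psd_mat S" and SS: "S ** S = A" and E: "eigsys A B"
  shows "S = sqm A B"
proof -
  have nn: "0 \<le> v \<bullet> (A *v v)" if "v \<in> B" for v
  proof -
    have "A *v v = S *v (S *v v)" using SS matrix_vector_mul_assoc[of S S v] by simp
    hence "v \<bullet> (A *v v) = v \<bullet> (S *v (S *v v))" by simp
    also have "\<dots> = (S *v v) \<bullet> (S *v v)" by (rule sym_dot[OF psd_sym[OF S]])
    finally have "v \<bullet> (A *v v) = (S *v v) \<bullet> (S *v v)" .
    thus ?thesis by simp
  qed
  have "S *v x = sqm A B *v x" for x
  proof -
    have "S *v x = S *v (\<Sum>v\<in>B. (v \<bullet> x) *\<^sub>R v)" using eigsys_expand[OF E, of x] by simp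
    also have "\<dots> = (\<Sum>v\<in>B. (v \<bullet> x) *\<^sub>R (S *v v))" by (simp add: mv_sum matrix_vector_mult_scaleR)
    also have "\<dots> = (\<Sum>v\<in>B. (sqrt (v \<bullet> (A *v v)) * (v \<bullet> x)) *\<^sub>R v)"
    proof (rule sum.cong[OF refl])
      fix v assume vB: "v \<in> B"
      hence "A *v v = (v \<bullet> (A *v v)) *\<^sub>R v" using E unfolding eigsys_def by blast
      from root_on_eig[OF S SS this nn[OF vB]]
      show "(v \<bullet> x) *\<^sub>R (S *v v) = (sqrt (v \<bullet> (A *v v)) * (v \<bullet> x)) *\<^sub>R v" by (simp add: mult.commute)
    qed
    also have "\<dots> = sqm A B *v x" by (simp add: sqm_apply[OF E])
    finally show ?thesis .
  qed
  thus ?thesis by (simp add: matrix_eq)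
qed

lemma psd_eig_nonneg: "psd_mat A \<Longrightarrow> 0 \<le> v \<bullet> (A *v v)" by (rule psd_nonneg)

lemma msqrt_unique:
  assumes S: "psd_mat S" and SS: "S ** S = A"
  shows "msqrt A = S"
proof -
  have symA: "transpose A = A" by (simp add: SS[symmetric] matrix_transpose_mul psd_sym[OF S])
  obtain B where E: "eigsys A B" using spectral[OF symA] by blast
  have u: "T = S" if "psd_mat T \<and> T ** T = A" for T
  proof -
    have "T = sqm A B" using that by (intro root_unique_apply[OF _ _ E]) auto
    also have "\<dots> = S" by (rule root_unique_apply[OF S SS E, symmetric])
    finally show ?thesis .
  qed
  show ?thesis unfolding msqrt_def
  proof (rule the_equality)
    show "psd_mat S \<and> S ** S = A" using S SS by simp
    fix T assume "psd_mat T \<and> T ** T = A"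
    thus "T = S" by (rule u)
  qed
qed

lemma msqrt:
  assumes A: "psd_mat A"
  shows "psd_mat (msqrt A)" "msqrt A ** msqrt A = A"
proof -
  obtain B where E: "eigsys A B" using spectral[OF psd_sym[OF A]] by blast
  have nn: "\<And>v. v \<in> B \<Longrightarrow> 0 \<le> v \<bullet> (A *v v)" using psd_nonneg[OF A] by blast
  have "msqrt A = sqm A B" by (rule msqrt_unique[OF sqm_psd[OF E nn] sqm_sq[OF E nn]])
  thus "psd_mat (msqrt A)" "msqrt A ** msqrt A = A" using sqm_psd[OF E nn] sqm_sq[OF E nn] by auto
qed



lemma minv:
  fixes A :: "real^'n^'n" assumes "invertible A"
  shows "A ** matrix_inv A = mat 1" "matrix_inv A ** A = mat 1"
proof -
  have "\<exists>A'. A ** A' = mat 1 \<and> A' ** A = mat 1" using assms unfolding invertible_def by blast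
  hence "A ** matrix_inv A = mat 1 \<and> matrix_inv A ** A = mat 1" unfolding matrix_inv_def by (rule someI_ex)
  thus "A ** matrix_inv A = mat 1" "matrix_inv A ** A = mat 1" by auto
qed

lemma minv_unique:
  fixes A B :: "real^'n^'n" assumes "A ** B = mat 1"
  shows "matrix_inv A = B"
proof -
  have BA: "B ** A = mat 1" using assms matrix_left_right_inverse by blast
  have inv: "invertible A" using assms BA unfolding invertible_def by blast
  have "matrix_inv A = matrix_inv A ** (A ** B)" using assms by simp
  also have "\<dots> = (matrix_inv A ** A) ** B" by (simp add: matrix_mul_assoc)
  also have "\<dots> = B" using minv(2)[OF inv] by simp
  finally show ?thesis .
qed

lemma minv_invertible:
  fixes A :: "real^'n^'n" assumes "invertible A" shows "invertible (matrix_inv A)"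
  using minv[OF assms] unfolding invertible_def by blast

lemma minv_minv:
  fixes A :: "real^'n^'n" assumes "invertible A" shows "matrix_inv (matrix_inv A) = A"
  using minv(2)[OF assms] by (rule minv_unique)

lemma psd_zero_form:
  fixes M :: "real^'n^'n"
  assumes M: "psd_mat M" and x: "x \<bullet> (M *v x) = 0"
  shows "M *v x = 0"
proof -
  have sym: "transpose M = M" using M by (rule psd_sym)
  have yz: "y \<bullet> (M *v x) = 0" for y
  proof (rule quad_zero)
    fix t :: real
    have "0 \<le> (x + t *\<^sub>R y) \<bullet> (M *v (x + t *\<^sub>R y))" using M by (rule psd_nonneg)
    also have "\<dots> = x \<bullet> (M *v x) + t * (x \<bullet> (M *v y)) + t * (y \<bullet> (M *v x)) + t^2 * (y \<bullet> (M *v y))"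
      by (simp add: matrix_vector_right_distrib matrix_vector_mult_scaleR inner_add_left inner_add_right
          power2_eq_square algebra_simps)
    also have "x \<bullet> (M *v y) = y \<bullet> (M *v x)" using sym_dot[OF sym, of x y] by (simp add: inner_commute)
    finally show "0 \<le> 2*t*(y \<bullet> (M *v x)) + t^2 * (y \<bullet> (M *v y))" using x by simp
  qed
  show ?thesis using yz[of "M *v x"] by simp
qed

lemma psd_invertible_pd:
  fixes M :: "real^'n^'n"
  assumes M: "psd_mat M" and inv: "invertible M" shows "pd_mat M"
  unfolding pd_mat_def
proof (intro conjI allI impI)
  show "sym_mat M" using M unfolding psd_mat_def by simp
  fix x :: "real^'n" assume x: "x \<noteq> 0"
  have ge: "0 \<le> x \<bullet> (M *v x)" using M by (rule psd_nonneg)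
  have "x \<bullet> (M *v x) \<noteq> 0"
  proof
    assume "x \<bullet> (M *v x) = 0"
    hence "M *v x = 0" by (rule psd_zero_form[OF M])
    hence "matrix_inv M *v (M *v x) = 0" by simp
    hence "x = 0" using minv(2)[OF inv] by (simp add: matrix_vector_mul_assoc)
    thus False using x by simp
  qed
  thus "0 < x \<bullet> (M *v x)" using ge by simp
qed

lemma pd_invertible:
  fixes M :: "real^'n^'n"
  assumes M: "pd_mat M" shows "invertible M"
proof -
  have "inj ((*v) M)"
  proof (rule injI)
    fix x y assume "M *v x = M *v y"
    hence "M *v (x - y) = 0" by (simp add: matrix_vector_mult_diff_distrib)
    hence z: "(x - y) \<bullet> (M *v (x - y)) = 0" by simp
    show "x = y"
    proof (rule ccontr)
      assume "x \<noteq> y"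
      hence "x - y \<noteq> 0" by simp
      hence "0 < (x - y) \<bullet> (M *v (x - y))" using M unfolding pd_mat_def by blast
      thus False using z by simp
    qed
  qed
  thus ?thesis using matrix_left_invertible_injective invertible_left_inverse by blast
qed

lemma pd_iff: "pd_mat (M::real^'n^'n) \<longleftrightarrow> psd_mat M \<and> invertible M"
  using pd_psd pd_invertible psd_invertible_pd by blast

lemma transpose_mul3: "transpose ((A::real^'n^'n) ** B ** C) = transpose C ** transpose B ** transpose A"
  by (simp add: matrix_transpose_mul matrix_mul_assoc)

lemma psd_congr:
  fixes P Q :: "real^'n^'n"
  assumes P: "psd_mat P" and Q: "transpose Q = Q"
  shows "psd_mat (Q ** P ** Q)"
  unfolding psd_mat_def sym_mat_def
proof (intro conjI allI)
  show "transpose (Q ** P ** Q) = Q ** P ** Q" by (simp add: transpose_mul3 Q psd_sym[OF P])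
  fix x
  have "x \<bullet> ((Q ** P ** Q) *v x) = x \<bullet> (Q *v (P *v (Q *v x)))" by (simp add: matrix_vector_mul_assoc matrix_mul_assoc)
  also have "\<dots> = (Q *v x) \<bullet> (P *v (Q *v x))" by (rule sym_dot[OF Q])
  finally show "0 \<le> x \<bullet> ((Q ** P ** Q) *v x)" using psd_nonneg[OF P] by simp
qed

lemma pd_congr:
  fixes P Q :: "real^'n^'n"
  assumes P: "pd_mat P" and Q: "transpose Q = Q" and iQ: "invertible Q"
  shows "pd_mat (Q ** P ** Q)"
  using psd_congr[OF pd_psd[OF P] Q] invertible_mult[OF invertible_mult[OF iQ pd_invertible[OF P]] iQ]
  by (simp add: pd_iff)

lemma minv_sym:
  fixes A :: "real^'n^'n"
  assumes sym: "transpose A = A" and inv: "invertible A"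
  shows "transpose (matrix_inv A) = matrix_inv A"
proof -
  have "A ** transpose (matrix_inv A) = transpose (matrix_inv A ** A)"
    by (simp add: matrix_transpose_mul sym)
  also have "\<dots> = mat 1" using minv(2)[OF inv] by simp
  finally have "matrix_inv A = transpose (matrix_inv A)" by (rule minv_unique)
  thus ?thesis by simp
qed

lemma pd_minv:
  fixes A :: "real^'n^'n"
  assumes A: "pd_mat A" shows "pd_mat (matrix_inv A)"
proof -
  have inv: "invertible A" using A by (rule pd_invertible)
  have sym: "transpose (matrix_inv A) = matrix_inv A" by (rule minv_sym[OF pd_sym[OF A] inv])
  have "psd_mat (matrix_inv A)"
    unfolding psd_mat_def sym_mat_def
  proof (intro conjI allI)
    show "transpose (matrix_inv A) = matrix_inv A" by (rule sym)
    fix x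
    define y where "y = matrix_inv A *v x"
    have xy: "x = A *v y" unfolding y_def using minv(1)[OF inv] by (simp add: matrix_vector_mul_assoc)
    have "x \<bullet> (matrix_inv A *v x) = (A *v y) \<bullet> y" using xy y_def by simp
    also have "\<dots> = y \<bullet> (A *v y)" by (simp add: inner_commute)
    finally show "0 \<le> x \<bullet> (matrix_inv A *v x)" using psd_nonneg[OF pd_psd[OF A]] by simp
  qed
  thus ?thesis using minv_invertible[OF inv] by (simp add: pd_iff)
qed

lemma msqrt_pd:
  fixes A :: "real^'n^'n"
  assumes A: "pd_mat A" shows "pd_mat (msqrt A)"
proof -
  have ps: "psd_mat (msqrt A)" and sq: "msqrt A ** msqrt A = A" using msqrt[OF pd_psd[OF A]] by auto
  have inv: "invertible A" using A by (rule pd_invertible)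
  have "msqrt A ** (msqrt A ** matrix_inv A) = mat 1" using sq minv(1)[OF inv] by (simp add: matrix_mul_assoc)
  hence "invertible (msqrt A)" using invertible_right_inverse by blast
  thus ?thesis using ps by (simp add: pd_iff)
qed

lemma sym_entry: "transpose (Y::real^'n^'n) = Y \<Longrightarrow> Y$k$i = Y$i$k"
proof -
  have "(transpose Y)$k$i = Y$i$k" by (simp add: transpose_def)
  thus "transpose Y = Y \<Longrightarrow> Y$k$i = Y$i$k" by simp
qed

lemma trace_sym_inner:
  fixes X Y :: "real^'n^'n"
  assumes "transpose Y = Y" shows "trace (X ** Y) = X \<bullet> Y"
proof -
  have "trace (X ** Y) = (\<Sum>i\<in>UNIV. \<Sum>k\<in>UNIV. X$i$k * Y$k$i)"
    by (simp add: trace_def matrix_matrix_mult_def)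
  also have "\<dots> = (\<Sum>i\<in>UNIV. \<Sum>k\<in>UNIV. X$i$k * Y$i$k)" using sym_entry[OF assms] by simp
  also have "\<dots> = X \<bullet> Y" by (simp add: inner_vec_def inner_real_def)
  finally show ?thesis .
qed

lemma diag_form: "(M::real^'n^'n)$i$i = axis i 1 \<bullet> (M *v axis i 1)"
  by (simp add: matrix_vector_mult_basis inner_axis' column_def)

lemma trace_psd: "psd_mat (M::real^'n^'n) \<Longrightarrow> 0 \<le> trace M"
  unfolding trace_def by (intro sum_nonneg) (simp add: diag_form psd_nonneg)

lemma trace_pd: assumes "pd_mat (M::real^'n^'n)" shows "0 < trace M"
  unfolding trace_def
proof (rule sum_pos)
  fix i :: 'n
  have "axis i (1::real) \<noteq> 0" by (simp add: axis_eq_0_iff)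
  thus "0 < M$i$i" using assms unfolding diag_form pd_mat_def by blast
qed auto

lemma tr_psd_psd:
  fixes P Q :: "real^'n^'n"
  assumes P: "psd_mat P" and Q: "psd_mat Q" shows "0 \<le> trace (P ** Q)"
proof -
  define R where "R = msqrt Q"
  have R: "psd_mat R" "R ** R = Q" unfolding R_def using msqrt[OF Q] by auto
  have "trace (P ** Q) = trace ((P ** R) ** R)" by (simp add: R(2)[symmetric] matrix_mul_assoc)
  also have "\<dots> = trace (R ** (P ** R))" by (rule trace_mul_sym)
  also have "\<dots> = trace (R ** P ** R)" by (simp add: matrix_mul_assoc)
  finally have e: "trace (P ** Q) = trace (R ** P ** R)" .
  have "0 \<le> trace (R ** P ** R)" by (rule trace_psd[OF psd_congr[OF P psd_sym[OF R(1)]]])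
  thus ?thesis using e by simp
qed

lemma tr_pd_pd:
  fixes P Q :: "real^'n^'n"
  assumes P: "pd_mat P" and Q: "pd_mat Q" shows "0 < trace (P ** Q)"
proof -
  define R where "R = msqrt Q"
  have R: "psd_mat R" "R ** R = Q" unfolding R_def using msqrt[OF pd_psd[OF Q]] by auto
  have Rpd: "pd_mat R" unfolding R_def by (rule msqrt_pd[OF Q])
  have "trace (P ** Q) = trace ((P ** R) ** R)" by (simp add: R(2)[symmetric] matrix_mul_assoc)
  also have "\<dots> = trace (R ** (P ** R))" by (rule trace_mul_sym)
  also have "\<dots> = trace (R ** P ** R)" by (simp add: matrix_mul_assoc)
  finally have e: "trace (P ** Q) = trace (R ** P ** R)" .
  have "0 < trace (R ** P ** R)" by (rule trace_pd[OF pd_congr[OF P psd_sym[OF R(1)] pd_invertible[OF Rpd]]])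
  thus ?thesis using e by simp
qed

lemma transpose_add': "transpose ((A::real^'n^'n) + B) = transpose A + transpose B"
  by (simp add: transpose_def vec_eq_iff)

lemma psd_add: "psd_mat (A::real^'n^'n) \<Longrightarrow> psd_mat B \<Longrightarrow> psd_mat (A + B)"
  unfolding psd_mat_def sym_mat_def
  by (simp add: transpose_add' matrix_vector_mult_add_rdistrib inner_add_right add_nonneg_nonneg)

lemma psd_scale: "0 \<le> c \<Longrightarrow> psd_mat (A::real^'n^'n) \<Longrightarrow> psd_mat (c *\<^sub>R A)"
  unfolding psd_mat_def sym_mat_def
  by (simp add: transpose_scalar scaleR_matrix_vector_assoc[symmetric])

lemma psd_zero: "psd_mat (0::real^'n^'n)"
  unfolding psd_mat_def sym_mat_def by (simp add: transpose_def vec_eq_iff)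

lemma psd_sum: "(\<And>i. i \<in> I \<Longrightarrow> psd_mat (M i)) \<Longrightarrow> psd_mat (\<Sum>i\<in>I. (M i :: real^'n^'n))"
  by (induction I rule: infinite_finite_induct) (simp_all add: psd_zero psd_add)

lemma pd_add_psd: "pd_mat (A::real^'n^'n) \<Longrightarrow> psd_mat B \<Longrightarrow> pd_mat (A + B)"
  unfolding pd_mat_def psd_mat_def sym_mat_def
  by (simp add: transpose_add' matrix_vector_mult_add_rdistrib inner_add_right add_pos_nonneg)

lemma pd_scale: "0 < c \<Longrightarrow> pd_mat (A::real^'n^'n) \<Longrightarrow> pd_mat (c *\<^sub>R A)"
  unfolding pd_mat_def sym_mat_def
  by (simp add: transpose_scalar scaleR_matrix_vector_assoc[symmetric])

lemma pd_sum:
  assumes "finite I" "I \<noteq> {}" "\<And>i. i \<in> I \<Longrightarrow> pd_mat (M i)"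
  shows "pd_mat (\<Sum>i\<in>I. (M i :: real^'n^'n))"
  using assms
proof (induction I rule: finite_ne_induct)
  case (singleton x) thus ?case by simp
next
  case (insert x F)
  have ps: "psd_mat (\<Sum>i\<in>F. M i)" using insert by (simp add: pd_psd)
  have "pd_mat (M x)" using insert.prems by simp
  from pd_add_psd[OF this ps] show ?case using insert.hyps by simp
qed

lemma form_sum: "x \<bullet> ((M::real^'n^'n) *v y) = (\<Sum>i\<in>UNIV. \<Sum>j\<in>UNIV. x$i * M$i$j * y$j)"
  by (simp add: inner_vec_def inner_real_def matrix_vector_mult_def sum_distrib_left mult.assoc)

lemma sum3_swap: "(\<Sum>i\<in>A. \<Sum>j\<in>B. \<Sum>k\<in>C. f i j k) = (\<Sum>k\<in>C. \<Sum>i\<in>A. \<Sum>j\<in>B. f i j k)"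
proof -
  have "(\<Sum>i\<in>A. \<Sum>j\<in>B. \<Sum>k\<in>C. f i j k) = (\<Sum>i\<in>A. \<Sum>k\<in>C. \<Sum>j\<in>B. f i j k)"
    by (rule sum.cong[OF refl], rule sum.swap)
  also have "\<dots> = (\<Sum>k\<in>C. \<Sum>i\<in>A. \<Sum>j\<in>B. f i j k)" by (rule sum.swap)
  finally show ?thesis .
qed

lemma schur_form:
  fixes A B R :: "real^'n^'n"
  assumes R: "transpose R = R" and B: "R ** R = B"
  shows "x \<bullet> (schur A B *v x) = (\<Sum>k\<in>UNIV. (\<chi> i. x$i * R$k$i) \<bullet> (A *v (\<chi> i. x$i * R$k$i)))"
proof -
  have Bij: "B$i$j = (\<Sum>k\<in>UNIV. R$k$i * R$k$j)" for i j
    using B sym_entry[OF R] by (auto simp: matrix_matrix_mult_def)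
  have "x \<bullet> (schur A B *v x) = (\<Sum>i\<in>UNIV. \<Sum>j\<in>UNIV. x$i * (A$i$j * B$i$j) * x$j)"
    by (simp add: form_sum schur_def)
  also have "\<dots> = (\<Sum>i\<in>UNIV. \<Sum>j\<in>UNIV. \<Sum>k\<in>UNIV. (x$i * R$k$i) * A$i$j * (x$j * R$k$j))"
    by (simp add: Bij sum_distrib_left sum_distrib_right mult_ac)
  also have "\<dots> = (\<Sum>k\<in>UNIV. \<Sum>i\<in>UNIV. \<Sum>j\<in>UNIV. (x$i * R$k$i) * A$i$j * (x$j * R$k$j))"
    by (rule sum3_swap)
  also have "\<dots> = (\<Sum>k\<in>UNIV. (\<chi> i. x$i * R$k$i) \<bullet> (A *v (\<chi> i. x$i * R$k$i)))"
    by (simp add: form_sum)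
  finally show ?thesis .
qed

lemma schur_sym:
  assumes a: "transpose A = A" and b: "transpose B = B" shows "transpose (schur A B) = schur A B"
proof -
  have "(transpose (schur A B))$i$j = (schur A B)$i$j" for i j
    using sym_entry[OF a, of i j] sym_entry[OF b, of i j] by (simp add: schur_def transpose_def)
  thus ?thesis by (simp add: vec_eq_iff)
qed

lemma schur_psd:
  fixes A B :: "real^'n^'n"
  assumes A: "psd_mat A" and B: "psd_mat B" shows "psd_mat (schur A B)"
proof -
  define R where "R = msqrt B"
  have R: "psd_mat R" "R ** R = B" unfolding R_def using msqrt[OF B] by auto
  show ?thesis unfolding psd_mat_def sym_mat_def
  proof (intro conjI allI)
    show "transpose (schur A B) = schur A B" by (rule schur_sym[OF psd_sym[OF A] psd_sym[OF B]])
    fix x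
    show "0 \<le> x \<bullet> (schur A B *v x)"
      unfolding schur_form[OF psd_sym[OF R(1)] R(2)] by (intro sum_nonneg psd_nonneg[OF A])
  qed
qed

lemma schur_pd:
  fixes A B :: "real^'n^'n"
  assumes A: "pd_mat A" and B: "pd_mat B" shows "pd_mat (schur A B)"
proof -
  define R where "R = msqrt B"
  have R: "psd_mat R" "R ** R = B" unfolding R_def using msqrt[OF pd_psd[OF B]] by auto
  show ?thesis unfolding pd_mat_def
  proof (intro conjI allI impI)
    show "sym_mat (schur A B)" using schur_psd[OF pd_psd[OF A] pd_psd[OF B]] unfolding psd_mat_def by simp
    fix x :: "real^'n" assume x: "x \<noteq> 0"
    define u where "u k = (\<chi> i. x$i * R$k$i)" for k
    have nn: "0 \<le> u k \<bullet> (A *v u k)" for k using psd_nonneg[OF pd_psd[OF A]] .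
    have "\<exists>k. u k \<noteq> 0"
    proof (rule ccontr)
      assume "\<not> (\<exists>k. u k \<noteq> 0)"
      hence uz: "u k = 0" for k by blast
      have u0: "x$i * R$k$i = 0" for k i
      proof -
        have "(u k)$i = 0" using uz[of k] by simp
        thus ?thesis by (simp add: u_def)
      qed
      obtain i where xi: "x$i \<noteq> 0" using x by (auto simp: vec_eq_iff)
      have Rki: "R$k$i = 0" for k using u0[of i k] xi by simp
      have Re: "R *v axis i 1 = 0" by (simp add: matrix_vector_mult_basis column_def Rki vec_eq_iff)
      have "B *v axis i 1 = R *v (R *v axis i 1)" by (simp add: matrix_vector_mul_assoc R(2))
      hence Be: "B *v axis i 1 = 0" using Re by simp
      have ax: "axis i (1::real) \<noteq> 0" by (simp add: axis_eq_0_iff)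
      have "0 < axis i 1 \<bullet> (B *v axis i 1)" using B ax unfolding pd_mat_def by blast
      thus False using Be by simp
    qed
    then obtain k where uk: "u k \<noteq> 0" by blast
    have pos: "0 < u k \<bullet> (A *v u k)" using A uk unfolding pd_mat_def by blast
    have "0 < (\<Sum>k\<in>UNIV. u k \<bullet> (A *v u k))"
      using pos nn by (intro sum_pos2[where i=k]) auto
    thus "0 < x \<bullet> (schur A B *v x)"
      unfolding schur_form[OF psd_sym[OF R(1)] R(2)] u_def by simp
  qed
qed



lemma transpose_diff': "transpose ((A::real^'n^'n) - B) = transpose A - transpose B"
  by (simp add: transpose_def vec_eq_iff)

lemma transpose_sum': "transpose (\<Sum>i\<in>I. (M i::real^'n^'n)) = (\<Sum>i\<in>I. transpose (M i))"
  by (induction I rule: infinite_finite_induct) (simp_all add: transpose_add' transpose_def vec_eq_iff)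

lemma pd_lower:
  fixes Z :: "real^'n^'n"
  assumes Z: "pd_mat Z"
  shows "\<exists>m>0. \<forall>x. m * (x \<bullet> x) \<le> x \<bullet> (Z *v x)"
proof -
  let ?K = "sphere (0::real^'n) 1"
  obtain i :: 'n where True by blast
  have "axis i (1::real) \<in> ?K" by simp
  hence ne: "?K \<noteq> {}" by blast
  have cont: "continuous_on ?K (\<lambda>y. y \<bullet> (Z *v y))"
    by (intro continuous_intros linear_continuous_on bounded_linear.linear matrix_vector_mul_bounded_linear)
      (simp add: bounded_linear.continuous_on continuous_on_id)
  obtain u where u: "u \<in> ?K" and umin: "\<And>y. y \<in> ?K \<Longrightarrow> u \<bullet> (Z *v u) \<le> y \<bullet> (Z *v y)"
    using continuous_attains_inf[OF compact_sphere ne cont] by blast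
  define m where "m = u \<bullet> (Z *v u)"
  have "u \<noteq> 0" using u by auto
  hence m0: "m > 0" using Z unfolding pd_mat_def m_def by blast
  have "m * (x \<bullet> x) \<le> x \<bullet> (Z *v x)" for x
  proof (cases "x = 0")
    case True thus ?thesis by simp
  next
    case False
    define z where "z = x /\<^sub>R norm x"
    have "z \<in> ?K" unfolding z_def using False by simp
    hence "m \<le> z \<bullet> (Z *v z)" using umin m_def by blast
    moreover have "z \<bullet> (Z *v z) = (x \<bullet> (Z *v x)) / (norm x)^2"
      unfolding z_def by (simp add: matrix_vector_mult_scaleR power2_eq_square divide_inverse)
    ultimately have "m * (norm x)^2 \<le> x \<bullet> (Z *v x)" using False by (simp add: le_divide_eq)
    thus ?thesis by (simp add: power2_norm_eq_inner)
  qed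
  thus ?thesis using m0 by blast
qed

lemma sandwich_exists:
  fixes Z Y :: "real^'n^'n"
  assumes Z: "pd_mat Z" and Y: "transpose Y = Y"
  shows "\<exists>c. psd_mat (c *\<^sub>R Z - Y) \<and> psd_mat (c *\<^sub>R Z + Y)"
proof -
  obtain m where m: "m > 0" "\<And>x. m * (x \<bullet> x) \<le> x \<bullet> (Z *v x)" using pd_lower[OF Z] by blast
  obtain K where K: "K > 0" "\<And>x. norm (Y *v x) \<le> norm x * K"
    using bounded_linear.pos_bounded[OF matrix_vector_mul_bounded_linear[of Y]] by blast
  define c where "c = K / m"
  have bnd: "\<bar>x \<bullet> (Y *v x)\<bar> \<le> c * (x \<bullet> (Z *v x))" for x
  proof -
    have "\<bar>x \<bullet> (Y *v x)\<bar> \<le> norm x * norm (Y *v x)" by (rule Cauchy_Schwarz_ineq2)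
    also have "\<dots> \<le> norm x * (norm x * K)" using K(2)[of x] by (simp add: mult_left_mono)
    also have "\<dots> = K * (x \<bullet> x)" by (simp add: power2_norm_eq_inner[symmetric] power2_eq_square)
    also have "\<dots> = c * (m * (x \<bullet> x))" unfolding c_def using m(1) by simp
    also have "\<dots> \<le> c * (x \<bullet> (Z *v x))"
      using m(2)[of x] c_def K(1) m(1) by (intro mult_left_mono) auto
    finally show ?thesis .
  qed
  have symZ: "transpose Z = Z" using Z by (rule pd_sym)
  have "psd_mat (c *\<^sub>R Z - Y)"
    unfolding psd_mat_def sym_mat_def
    using bnd by (auto simp: transpose_diff' transpose_scalar symZ Y matrix_vector_mult_diff_rdistrib
        scaleR_matrix_vector_assoc[symmetric] inner_diff_right abs_le_iff)
  moreover have "psd_mat (c *\<^sub>R Z + Y)"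
    unfolding psd_mat_def sym_mat_def
  proof (intro conjI allI)
    show "transpose (c *\<^sub>R Z + Y) = c *\<^sub>R Z + Y" by (simp add: transpose_add' transpose_scalar symZ Y)
    fix x
    have "x \<bullet> ((c *\<^sub>R Z + Y) *v x) = c * (x \<bullet> (Z *v x)) + x \<bullet> (Y *v x)"
      by (simp add: matrix_vector_mult_add_rdistrib scaleR_matrix_vector_assoc[symmetric] inner_add_right)
    thus "0 \<le> x \<bullet> ((c *\<^sub>R Z + Y) *v x)" using bnd[of x] by (simp add: abs_le_iff)
  qed
  ultimately show ?thesis by blast
qed

lemma polar:
  fixes M :: "real^'n^'n"
  assumes M: "transpose M = M"
  shows "a \<bullet> (M *v b) = ((a + b) \<bullet> (M *v (a + b)) - (a - b) \<bullet> (M *v (a - b))) / 4"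
proof -
  have ba: "b \<bullet> (M *v a) = a \<bullet> (M *v b)" using sym_dot[OF M, of b a] by (simp add: inner_commute)
  show ?thesis
    by (simp add: matrix_vector_right_distrib matrix_vector_mult_diff_distrib inner_add_left inner_add_right
        inner_diff_left inner_diff_right ba)
qed

lemma entry_form: "(M::real^'n^'n)$i$j = axis i 1 \<bullet> (M *v axis j 1)"
  by (simp add: matrix_vector_mult_basis inner_axis' column_def)

lemma norm_entries: "norm (M::real^'n^'n) \<le> (\<Sum>i\<in>UNIV. \<Sum>j\<in>UNIV. \<bar>M$i$j\<bar>)"
proof -
  have "norm M \<le> (\<Sum>i\<in>UNIV. norm (M$i))"
    unfolding norm_vec_def by (rule L2_set_le_sum) simp
  also have "\<dots> \<le> (\<Sum>i\<in>UNIV. \<Sum>j\<in>UNIV. \<bar>M$i$j\<bar>)"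
    by (intro sum_mono norm_le_l1_cart)
  finally show ?thesis .
qed

definition zbound :: "real^'n^'n \<Rightarrow> real" where
  "zbound Z = (\<Sum>i\<in>UNIV. \<Sum>j\<in>UNIV.
     ((axis i 1 + axis j 1) \<bullet> (Z *v (axis i 1 + axis j 1)) + (axis i 1 - axis j 1) \<bullet> (Z *v (axis i 1 - axis j 1))) / 4)"

lemma sandwich_norm:
  fixes Z M :: "real^'n^'n"
  assumes M: "transpose M = M" and p1: "psd_mat (c *\<^sub>R Z - M)" and p2: "psd_mat (c *\<^sub>R Z + M)"
  shows "norm M \<le> c * zbound Z"
proof -
  have bnd: "\<bar>x \<bullet> (M *v x)\<bar> \<le> c * (x \<bullet> (Z *v x))" for x
  proof -
    have "0 \<le> x \<bullet> ((c *\<^sub>R Z - M) *v x)" using p1 by (rule psd_nonneg)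
    hence a: "x \<bullet> (M *v x) \<le> c * (x \<bullet> (Z *v x))"
      by (simp add: matrix_vector_mult_diff_rdistrib scaleR_matrix_vector_assoc[symmetric] inner_diff_right)
    have "0 \<le> x \<bullet> ((c *\<^sub>R Z + M) *v x)" using p2 by (rule psd_nonneg)
    hence b: "- (x \<bullet> (M *v x)) \<le> c * (x \<bullet> (Z *v x))"
      by (simp add: matrix_vector_mult_add_rdistrib scaleR_matrix_vector_assoc[symmetric] inner_add_right)
    show ?thesis using a b by (simp add: abs_le_iff)
  qed
  have e: "\<bar>M$i$j\<bar> \<le> c * (((axis i 1 + axis j 1) \<bullet> (Z *v (axis i 1 + axis j 1)) + (axis i 1 - axis j 1) \<bullet> (Z *v (axis i 1 - axis j 1))) / 4)"
    for i j
  proof -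
    let ?p = "axis i (1::real) + axis j 1" and ?q = "axis i (1::real) - axis j 1"
    have "M$i$j = (?p \<bullet> (M *v ?p) - ?q \<bullet> (M *v ?q)) / 4" unfolding entry_form by (rule polar[OF M])
    hence "\<bar>M$i$j\<bar> \<le> (\<bar>?p \<bullet> (M *v ?p)\<bar> + \<bar>?q \<bullet> (M *v ?q)\<bar>) / 4" by simp
    also have "\<dots> \<le> (c * (?p \<bullet> (Z *v ?p)) + c * (?q \<bullet> (Z *v ?q))) / 4"
      using bnd[of ?p] bnd[of ?q] by simp
    finally show ?thesis by (simp add: algebra_simps)
  qed
  have "norm M \<le> (\<Sum>i\<in>UNIV. \<Sum>j\<in>UNIV. \<bar>M$i$j\<bar>)" by (rule norm_entries)
  also have "\<dots> \<le> c * zbound Z"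
    unfolding zbound_def sum_distrib_left by (intro sum_mono e)
  finally show ?thesis .
qed



lemma key_ineq:
  fixes B :: "'i \<Rightarrow> real^'n^'n" and Z Y :: "real^'n^'n"
  assumes I: "finite I" and Bpsd: "\<And>i. i \<in> I \<Longrightarrow> psd_mat (B i)" and Zpd: "pd_mat Z"
    and fixZ: "(\<Sum>i\<in>I. (Z \<bullet> B i) *\<^sub>R B i) = Z" and Ysym: "transpose Y = Y"
  shows "(\<Sum>i\<in>I. (Y \<bullet> B i)^2) \<le> Y \<bullet> Y"
proof -
  define T where "T X = (\<Sum>i\<in>I. (X \<bullet> B i) *\<^sub>R B i)" for X :: "real^'n^'n"
  have Tlin: "T (a *\<^sub>R X1 + b *\<^sub>R X2) = a *\<^sub>R T X1 + b *\<^sub>R T X2" for a b X1 X2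
    by (simp add: T_def inner_add_left scaleR_add_left sum.distrib scaleR_sum_right)
  have Tinner: "T X \<bullet> W = (\<Sum>i\<in>I. (X \<bullet> B i) * (W \<bullet> B i))" for X W
    unfolding T_def inner_sum_left by (rule sum.cong[OF refl]) (simp add: inner_commute)
  have Tself: "T X \<bullet> W = X \<bullet> T W" for X W
  proof -
    have "X \<bullet> T W = T W \<bullet> X" by (rule inner_commute)
    also have "\<dots> = (\<Sum>i\<in>I. (X \<bullet> B i) * (W \<bullet> B i))"
      unfolding Tinner by (rule sum.cong[OF refl]) simp
    finally show ?thesis using Tinner[of X W] by simp
  qed
  have Tsym: "transpose (T X) = T X" for X
    unfolding T_def transpose_sum'
    by (rule sum.cong[OF refl]) (simp add: transpose_scalar psd_sym[OF Bpsd])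
  have Tpsd: "psd_mat (T X)" if X: "psd_mat X" for X
    unfolding T_def
  proof (rule psd_sum)
    fix i assume i: "i \<in> I"
    have "0 \<le> X \<bullet> B i"
      using trace_sym_inner[OF psd_sym[OF Bpsd[OF i]], of X] tr_psd_psd[OF X Bpsd[OF i]] by simp
    thus "psd_mat ((X \<bullet> B i) *\<^sub>R B i)" by (rule psd_scale[OF _ Bpsd[OF i]])
  qed
  have TZ: "T Z = Z" using fixZ unfolding T_def by simp
  have T0: "T 0 = 0" unfolding T_def by simp
  define Yn where "Yn n = (T ^^ n) Y" for n
  have Yn0: "Yn 0 = Y" and YnS: "Yn (Suc n) = T (Yn n)" for n by (simp_all add: Yn_def)
  have Ynsym: "transpose (Yn n) = Yn n" for n by (cases n) (simp_all add: YnS Yn0 Ysym Tsym)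
  obtain c where c: "psd_mat (c *\<^sub>R Z - Y)" "psd_mat (c *\<^sub>R Z + Y)"
    using sandwich_exists[OF Zpd Ysym] by blast
  have inv: "psd_mat (c *\<^sub>R Z - Yn n) \<and> psd_mat (c *\<^sub>R Z + Yn n)" for n
  proof (induction n)
    case 0 show ?case using c by (simp add: Yn0)
  next
    case (Suc n)
    have e1: "T (c *\<^sub>R Z - Yn n) = c *\<^sub>R Z - Yn (Suc n)"
      using Tlin[of c Z "-1" "Yn n"] by (simp add: TZ YnS)
    have e2: "T (c *\<^sub>R Z + Yn n) = c *\<^sub>R Z + Yn (Suc n)"
      using Tlin[of c Z 1 "Yn n"] by (simp add: TZ YnS)
    have p1: "psd_mat (c *\<^sub>R Z - Yn n)" and p2: "psd_mat (c *\<^sub>R Z + Yn n)" using Suc.IH by auto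
    show ?case using Tpsd[OF p1] Tpsd[OF p2] unfolding e1 e2 by simp
  qed
  define a where "a n = norm (Yn n)" for n
  have abnd: "a n \<le> c * zbound Z" for n
    unfolding a_def using inv[of n] by (intro sandwich_norm[OF Ynsym]) auto
  have a0: "0 \<le> a n" for n unfolding a_def by simp
  have logc: "(a (Suc n))^2 \<le> a n * a (Suc (Suc n))" for n
  proof -
    have "(a (Suc n))^2 = Yn (Suc n) \<bullet> Yn (Suc n)" by (simp add: a_def power2_norm_eq_inner)
    also have "\<dots> = T (Yn n) \<bullet> Yn (Suc n)" by (simp add: YnS)
    also have "\<dots> = Yn n \<bullet> T (Yn (Suc n))" by (rule Tself)
    also have "\<dots> = Yn n \<bullet> Yn (Suc (Suc n))" by (simp add: YnS)
    also have "\<dots> \<le> a n * a (Suc (Suc n))" unfolding a_def by (rule norm_cauchy_schwarz)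
    finally show ?thesis .
  qed
  have main: "a (Suc 0) \<le> a 0"
  proof (rule ccontr)
    assume "\<not> a (Suc 0) \<le> a 0"
    hence gt: "a 0 < a (Suc 0)" by simp
    have a0pos: "0 < a 0"
    proof (rule ccontr)
      assume "\<not> 0 < a 0"
      hence z: "a 0 = 0" using a0[of 0] by simp
      hence "Y = 0" by (simp add: a_def Yn0)
      hence "Yn (Suc 0) = 0" by (simp add: YnS Yn0 T0)
      hence "a (Suc 0) = 0" by (simp add: a_def)
      thus False using gt z by simp
    qed
    define r where "r = a (Suc 0) / a 0"
    have r1: "1 < r" unfolding r_def using gt a0pos by simp
    have step: "r * a n \<le> a (Suc n) \<and> r^n * a 0 \<le> a n" for n
    proof (induction n)
      case 0 show ?case unfolding r_def using a0pos by simp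
    next
      case (Suc n)
      have h1: "r * a n \<le> a (Suc n)" and h2: "r^n * a 0 \<le> a n" using Suc.IH by auto
      have "0 < r^n * a 0" using r1 a0pos by simp
      hence anpos: "0 < a n" using h2 by linarith
      have "r^(Suc n) * a 0 = r * (r^n * a 0)" by simp
      also have "\<dots> \<le> r * a n" using h2 r1 by (simp add: mult_left_mono)
      also have "\<dots> \<le> a (Suc n)" by (rule h1)
      finally have g2: "r^(Suc n) * a 0 \<le> a (Suc n)" .
      have "a n * (r * a (Suc n)) = (r * a n) * a (Suc n)" by (simp add: algebra_simps)
      also have "\<dots> \<le> a (Suc n) * a (Suc n)" using h1 a0[of "Suc n"] by (simp add: mult_right_mono)
      also have "\<dots> \<le> a n * a (Suc (Suc n))" using logc[of n] by (simp add: power2_eq_square)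
      finally have "a n * (r * a (Suc n)) \<le> a n * a (Suc (Suc n))" .
      hence g1: "r * a (Suc n) \<le> a (Suc (Suc n))" using anpos by (simp add: mult_le_cancel_left_pos)
      show ?case using g1 g2 by simp
    qed
    obtain N where N: "c * zbound Z / a 0 < r^N" using real_arch_pow[OF r1] by blast
    hence "c * zbound Z < r^N * a 0" using a0pos by (simp add: divide_less_eq)
    moreover have "r^N * a 0 \<le> c * zbound Z" using step[of N] abnd[of N] by linarith
    ultimately show False by simp
  qed
  have "(\<Sum>i\<in>I. (Y \<bullet> B i)^2) = T Y \<bullet> Y" by (simp add: Tinner power2_eq_square)
  also have "\<dots> \<le> norm (T Y) * norm Y" by (rule norm_cauchy_schwarz)
  also have "\<dots> = a (Suc 0) * a 0" by (simp add: a_def YnS Yn0)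
  also have "\<dots> \<le> a 0 * a 0" using main a0[of 0] by (simp add: mult_right_mono)
  also have "\<dots> = Y \<bullet> Y" by (simp add: a_def Yn0 power2_norm_eq_inner[symmetric] power2_eq_square)
  finally show ?thesis .
qed



lemma mm_radd: "((A::real^'n^'n) + B) ** C = A ** C + B ** C"
  by (simp add: matrix_matrix_mult_def vec_eq_iff sum.distrib distrib_right)
lemma mm_scale_r: "(A::real^'n^'n) ** (c *\<^sub>R B) = c *\<^sub>R (A ** B)"
  by (simp add: matrix_matrix_mult_def vec_eq_iff sum_distrib_left mult.left_commute)
lemma mm_scale_l: "(c *\<^sub>R (A::real^'n^'n)) ** B = c *\<^sub>R (A ** B)"
  by (simp add: matrix_matrix_mult_def vec_eq_iff sum_distrib_left mult.assoc)
lemma mm_zero_r: "(A::real^'n^'n) ** 0 = 0" by (simp add: matrix_matrix_mult_def vec_eq_iff)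
lemma mm_zero_l: "0 ** (A::real^'n^'n) = 0" by (simp add: matrix_matrix_mult_def vec_eq_iff)

lemma mm_sum:
  fixes P Q :: "real^'n^'n" and M :: "'i \<Rightarrow> real^'n^'n"
  shows "P ** (\<Sum>i\<in>I. c i *\<^sub>R M i) ** Q = (\<Sum>i\<in>I. c i *\<^sub>R (P ** M i ** Q))"
proof (induction I rule: infinite_finite_induct)
  case (infinite A) thus ?case by (simp add: mm_zero_r mm_zero_l)
next
  case empty thus ?case by (simp add: mm_zero_r mm_zero_l)
next
  case (insert x F)
  have "P ** (\<Sum>i\<in>insert x F. c i *\<^sub>R M i) ** Q = P ** (c x *\<^sub>R M x + (\<Sum>i\<in>F. c i *\<^sub>R M i)) ** Q"
    using insert.hyps by simp
  also have "\<dots> = (P ** (c x *\<^sub>R M x) + P ** (\<Sum>i\<in>F. c i *\<^sub>R M i)) ** Q"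
    by (simp only: matrix_add_ldistrib)
  also have "\<dots> = P ** (c x *\<^sub>R M x) ** Q + P ** (\<Sum>i\<in>F. c i *\<^sub>R M i) ** Q"
    by (rule mm_radd)
  also have "\<dots> = c x *\<^sub>R (P ** M x ** Q) + (\<Sum>i\<in>F. c i *\<^sub>R (P ** M i ** Q))"
    using insert.IH by (simp add: mm_scale_r mm_scale_l)
  also have "\<dots> = (\<Sum>i\<in>insert x F. c i *\<^sub>R (P ** M i ** Q))" using insert.hyps by simp
  finally show ?case .
qed

lemma trace_conj:
  fixes X A P Pi :: "real^'n^'n"
  assumes PPi: "Pi ** P = mat 1"
  shows "trace (X ** A) = trace ((Pi ** X ** Pi) ** (P ** A ** P))"
proof -
  have "(Pi ** X ** Pi) ** (P ** A ** P) = Pi ** (X ** A ** P)"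
    using PPi by (simp add: matrix_mul_assoc) (simp add: matrix_mul_assoc[symmetric])
  hence "trace ((Pi ** X ** Pi) ** (P ** A ** P)) = trace (Pi ** (X ** A ** P))" by simp
  also have "\<dots> = trace ((X ** A ** P) ** Pi)" by (rule trace_mul_sym)
  also have "\<dots> = trace (X ** A)"
  proof -
    have "P ** Pi = mat 1" using PPi matrix_left_right_inverse by blast
    hence "(X ** A ** P) ** Pi = X ** A" by (simp add: matrix_mul_assoc[symmetric])
    thus ?thesis by simp
  qed
  finally show ?thesis by simp
qed

lemma dsum_pair: "(\<Sum>i\<in>UNIV. \<Sum>j\<in>UNIV. f i j) = (\<Sum>p\<in>(UNIV::('d::finite \<times> 'd) set). f (fst p) (snd p))"
  unfolding UNIV_Times_UNIV[symmetric] sum.cartesian_product by (simp add: case_prod_unfold)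

lemma final_ineq:
  fixes B :: "'d::finite \<Rightarrow> 'd \<Rightarrow> real^'n^'n" and Z :: "real^'n^'n" and t :: "'d \<Rightarrow> 'd \<Rightarrow> real"
  assumes Bpsd: "\<And>i j. psd_mat (B i j)" and Zpd: "pd_mat Z"
    and fixZ: "(\<Sum>i\<in>UNIV. \<Sum>j\<in>UNIV. (Z \<bullet> B i j) *\<^sub>R B i j) = Z"
  shows "(\<Sum>i\<in>UNIV. \<Sum>j\<in>UNIV. (t i j - (\<Sum>k\<in>UNIV. \<Sum>l\<in>UNIV. t k l *\<^sub>R B k l) \<bullet> B i j)^2)
    \<le> (\<Sum>i\<in>UNIV. \<Sum>j\<in>UNIV. (t i j - Z \<bullet> B i j)^2)"
proof -
  define Bp where "Bp p = B (fst p) (snd p)" for p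
  define tp where "tp p = t (fst p) (snd p)" for p
  define Bh where "Bh = (\<Sum>p\<in>UNIV. tp p *\<^sub>R Bp p)"
  have Bh: "(\<Sum>k\<in>UNIV. \<Sum>l\<in>UNIV. t k l *\<^sub>R B k l) = Bh" unfolding Bh_def tp_def Bp_def dsum_pair ..
  have fixZ': "(\<Sum>p\<in>UNIV. (Z \<bullet> Bp p) *\<^sub>R Bp p) = Z" using fixZ unfolding Bp_def dsum_pair .
  have Bhsym: "transpose Bh = Bh"
    unfolding Bh_def transpose_sum' by (rule sum.cong[OF refl]) (simp add: transpose_scalar psd_sym[OF Bpsd] Bp_def)
  have key: "(\<Sum>p\<in>UNIV. (Bh \<bullet> Bp p)^2) \<le> Bh \<bullet> Bh"
  proof -
    have fin: "finite (UNIV :: ('d \<times> 'd) set)" by simp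
    show ?thesis by (rule key_ineq[OF fin _ Zpd fixZ' Bhsym]) (simp add: Bp_def Bpsd)
  qed
  have "Bh \<bullet> (\<Sum>p\<in>UNIV. tp p *\<^sub>R Bp p) = (\<Sum>p\<in>UNIV. tp p * (Bh \<bullet> Bp p))"
    by (simp add: inner_sum_right)
  hence s1: "(\<Sum>p\<in>UNIV. tp p * (Bh \<bullet> Bp p)) = Bh \<bullet> Bh" unfolding Bh_def[symmetric] by simp
  have s2: "(\<Sum>p\<in>UNIV. tp p * (Z \<bullet> Bp p)) = Z \<bullet> Bh"
    by (simp add: Bh_def inner_sum_right)
  have s3: "(\<Sum>p\<in>UNIV. (Z \<bullet> Bp p)^2) = Z \<bullet> Z"
  proof -
    have "Z \<bullet> Z = Z \<bullet> (\<Sum>p\<in>UNIV. (Z \<bullet> Bp p) *\<^sub>R Bp p)" using fixZ' by simp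
    also have "\<dots> = (\<Sum>p\<in>UNIV. (Z \<bullet> Bp p)^2)" by (simp add: inner_sum_right power2_eq_square)
    finally show ?thesis by simp
  qed
  have expand: "(\<Sum>p\<in>UNIV. (tp p - X \<bullet> Bp p)^2) =
      (\<Sum>p\<in>UNIV. (tp p)^2) - 2 * (\<Sum>p\<in>UNIV. tp p * (X \<bullet> Bp p)) + (\<Sum>p\<in>UNIV. (X \<bullet> Bp p)^2)" for X
    by (simp add: power2_diff sum.distrib sum_subtractf sum_distrib_left mult.assoc)
  have sq: "0 \<le> (Z - Bh) \<bullet> (Z - Bh)" by simp
  have sq': "(Z - Bh) \<bullet> (Z - Bh) = Z \<bullet> Z - 2 * (Z \<bullet> Bh) + Bh \<bullet> Bh"
    by (simp add: inner_diff_left inner_diff_right inner_commute)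
  have "(\<Sum>p\<in>UNIV. (tp p - Bh \<bullet> Bp p)^2) \<le> (\<Sum>p\<in>UNIV. (tp p - Z \<bullet> Bp p)^2)"
    unfolding expand s1 s2 s3 using key sq sq' by linarith
  thus ?thesis unfolding Bh dsum_pair tp_def Bp_def .
qed



lemma mm_sum':
  fixes P Q :: "real^'n^'n" and M :: "'i \<Rightarrow> real^'n^'n"
  shows "P ** (\<Sum>i\<in>I. M i) ** Q = (\<Sum>i\<in>I. P ** M i ** Q)"
  using mm_sum[of P "\<lambda>_. 1" M I Q] by simp

theorem mainTheorem6:
  fixes T :: "'d::finite \<Rightarrow> 'd \<Rightarrow> 'd \<Rightarrow> real"
    and C1 C2 :: "'d \<Rightarrow> real^'r::finite^'r"
    and i3 :: 'd
  assumes T_nonneg: "\<And>i1 i2 i3'. 0 \<le> T i1 i2 i3'"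
    and C1_pd: "\<And>i. pd_mat (C1 i)"
    and C2_pd: "\<And>i. pd_mat (C2 i)"
  defines "t \<equiv> (\<lambda>i1 i2. T i1 i2 i3)"
  shows "psd_mat (Aadj C1 C2 t) \<and>
    (\<forall>Cold :: real^'r^'r. pd_mat Cold \<longrightarrow>
      (let W = gmean (matrix_inv (Aadj C1 C2 (Aop C1 C2 Cold))) Cold;
           Cnew = W ** Aadj C1 C2 t ** W
       in psd_mat Cnew \<and>
          sqnorm2 (\<lambda>i1 i2. t i1 i2 - Aop C1 C2 Cnew i1 i2)
            \<le> sqnorm2 (\<lambda>i1 i2. t i1 i2 - Aop C1 C2 Cold i1 i2)))"
proof -
  define A where "A i j = schur (C1 i) (C2 j)" for i j
  have Apd: "pd_mat (A i j)" for i j unfolding A_def by (rule schur_pd[OF C1_pd C2_pd])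
  have Asym: "transpose (A i j) = A i j" for i j using pd_sym[OF Apd] .
  have Aop_eq: "Aop C1 C2 X i j = X \<bullet> A i j" for X i j
  proof -
    have "Aop C1 C2 X i j = trace (X ** A i j)" by (simp add: Aop_def tr_inner_def A_def)
    also have "\<dots> = X \<bullet> A i j" by (rule trace_sym_inner[OF Asym])
    finally show ?thesis .
  qed
  have Aadj_eq: "Aadj C1 C2 y = (\<Sum>i\<in>UNIV. \<Sum>j\<in>UNIV. y i j *\<^sub>R A i j)" for y
    by (simp add: Aadj_def A_def)
  have sq_eq: "sqnorm2 v = (\<Sum>i\<in>UNIV. \<Sum>j\<in>UNIV. (v i j)^2)" for v :: "'d \<Rightarrow> 'd \<Rightarrow> real"
    by (simp add: sqnorm2_def)
  define Bm where "Bm = Aadj C1 C2 t"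
  have Bm: "Bm = (\<Sum>i\<in>UNIV. \<Sum>j\<in>UNIV. t i j *\<^sub>R A i j)" unfolding Bm_def Aadj_eq ..
  have tnn: "0 \<le> t i j" for i j unfolding t_def by (rule T_nonneg)
  have Bmpsd: "psd_mat Bm" unfolding Bm
    by (intro psd_sum psd_scale tnn pd_psd[OF Apd])
  show ?thesis
  proof (intro conjI allI impI)
    show "psd_mat (Aadj C1 C2 t)" using Bmpsd unfolding Bm_def .
    fix Cold :: "real^'r^'r" assume Cold: "pd_mat Cold"
    define Ap where "Ap = Aadj C1 C2 (Aop C1 C2 Cold)"
    have Ap: "Ap = (\<Sum>i\<in>UNIV. \<Sum>j\<in>UNIV. (Cold \<bullet> A i j) *\<^sub>R A i j)"
      unfolding Ap_def Aadj_eq Aop_eq ..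
    have Appd: "pd_mat Ap" unfolding Ap
    proof (rule pd_sum)
      fix i :: 'd
      show "pd_mat (\<Sum>j\<in>UNIV. (Cold \<bullet> A i j) *\<^sub>R A i j)"
      proof (rule pd_sum)
        fix j :: 'd
        have "0 < trace (Cold ** A i j)" by (rule tr_pd_pd[OF Cold Apd])
        hence "0 < Cold \<bullet> A i j" using trace_sym_inner[OF Asym] by simp
        thus "pd_mat ((Cold \<bullet> A i j) *\<^sub>R A i j)" by (rule pd_scale[OF _ Apd])
      qed auto
    qed auto
    have Apinv: "invertible Ap" by (rule pd_invertible[OF Appd])
    define C where "C = matrix_inv Ap"
    have Cpd: "pd_mat C" unfolding C_def by (rule pd_minv[OF Appd])
    define Ch where "Ch = msqrt C"
    have Chpd: "pd_mat Ch" unfolding Ch_def by (rule msqrt_pd[OF Cpd])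
    have ChCh: "Ch ** Ch = C" unfolding Ch_def using msqrt(2)[OF pd_psd[OF Cpd]] .
    have Chsym: "transpose Ch = Ch" by (rule pd_sym[OF Chpd])
    have Chinv: "invertible Ch" by (rule pd_invertible[OF Chpd])
    define Chi where "Chi = matrix_inv Ch"
    have Chipd: "pd_mat Chi" unfolding Chi_def by (rule pd_minv[OF Chpd])
    have ChiCh: "Chi ** Ch = mat 1" unfolding Chi_def by (rule minv(2)[OF Chinv])
    have ChChi: "Ch ** Chi = mat 1" unfolding Chi_def by (rule minv(1)[OF Chinv])
    have Ipd: "pd_mat (Chi ** Cold ** Chi)"
      by (rule pd_congr[OF Cold pd_sym[OF Chipd] pd_invertible[OF Chipd]])
    define Mm where "Mm = msqrt (Chi ** Cold ** Chi)"
    have Mmpd: "pd_mat Mm" unfolding Mm_def by (rule msqrt_pd[OF Ipd])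
    have MmMm: "Mm ** Mm = Chi ** Cold ** Chi" unfolding Mm_def using msqrt(2)[OF pd_psd[OF Ipd]] .
    define W where "W = Ch ** Mm ** Ch"
    have W_eq: "gmean (matrix_inv (Aadj C1 C2 (Aop C1 C2 Cold))) Cold = W"
      unfolding W_def Mm_def Chi_def Ch_def C_def Ap_def gmean_def Let_def ..
    have Wpd: "pd_mat W" unfolding W_def by (rule pd_congr[OF Mmpd Chsym Chinv])
    have CAp: "C ** Ap = mat 1" unfolding C_def by (rule minv(2)[OF Apinv])
    have ChApCh: "Ch ** Ap ** Ch = mat 1"
    proof -
      have "Ch ** Ap ** Ch = Chi ** ((Ch ** Ch) ** Ap) ** Ch" by (simp add: matrix_mul_assoc ChiCh)
      also have "\<dots> = Chi ** Ch" by (simp only: ChCh CAp matrix_mul_rid)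
      also have "\<dots> = mat 1" by (rule ChiCh)
      finally show ?thesis .
    qed
    have WApW: "W ** Ap ** W = Cold"
    proof -
      have "W ** Ap ** W = Ch ** Mm ** (Ch ** Ap ** Ch) ** Mm ** Ch" unfolding W_def by (simp add: matrix_mul_assoc)
      also have "\<dots> = Ch ** (Mm ** Mm) ** Ch" unfolding ChApCh by (simp add: matrix_mul_assoc)
      also have "\<dots> = (Ch ** Chi) ** Cold ** (Chi ** Ch)" unfolding MmMm by (simp add: matrix_mul_assoc)
      also have "\<dots> = Cold" by (simp add: ChChi ChiCh)
      finally show ?thesis .
    qed
    define P where "P = msqrt W"
    have Ppd: "pd_mat P" unfolding P_def by (rule msqrt_pd[OF Wpd])
    have PP: "P ** P = W" unfolding P_def using msqrt(2)[OF pd_psd[OF Wpd]] .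
    have Psym: "transpose P = P" by (rule pd_sym[OF Ppd])
    have Pinv: "invertible P" by (rule pd_invertible[OF Ppd])
    define Pi where "Pi = matrix_inv P"
    have PiP: "Pi ** P = mat 1" unfolding Pi_def by (rule minv(2)[OF Pinv])
    have PPi: "P ** Pi = mat 1" unfolding Pi_def by (rule minv(1)[OF Pinv])
    have Pipd: "pd_mat Pi" unfolding Pi_def by (rule pd_minv[OF Ppd])
    define B where "B i j = P ** A i j ** P" for i j
    have Bpd: "pd_mat (B i j)" for i j unfolding B_def by (rule pd_congr[OF Apd Psym Pinv])
    have Bsym: "transpose (B i j) = B i j" for i j by (rule pd_sym[OF Bpd])
    have conv: "X \<bullet> A i j = (Pi ** X ** Pi) \<bullet> B i j" for X i j
    proof -
      have "X \<bullet> A i j = trace (X ** A i j)" by (rule trace_sym_inner[OF Asym, symmetric])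
      also have "\<dots> = trace ((Pi ** X ** Pi) ** B i j)" unfolding B_def by (rule trace_conj[OF PiP])
      also have "\<dots> = (Pi ** X ** Pi) \<bullet> B i j" by (rule trace_sym_inner[OF Bsym])
      finally show ?thesis .
    qed
    define Z where "Z = Pi ** Cold ** Pi"
    have Zpd: "pd_mat Z" unfolding Z_def
      by (rule pd_congr[OF Cold pd_sym[OF Pipd] pd_invertible[OF Pipd]])
    have PApP: "P ** Ap ** P = Z"
    proof -
      have "Z = Pi ** (W ** Ap ** W) ** Pi" unfolding Z_def WApW ..
      also have "\<dots> = (Pi ** P) ** (P ** Ap ** P) ** (P ** Pi)" unfolding PP[symmetric] by (simp add: matrix_mul_assoc)
      also have "\<dots> = P ** Ap ** P" by (simp add: PiP PPi)
      finally show ?thesis by simp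
    qed
    have fixZ: "(\<Sum>i\<in>UNIV. \<Sum>j\<in>UNIV. (Z \<bullet> B i j) *\<^sub>R B i j) = Z"
    proof -
      have "P ** Ap ** P = (\<Sum>i\<in>UNIV. \<Sum>j\<in>UNIV. (Cold \<bullet> A i j) *\<^sub>R B i j)"
        unfolding Ap B_def by (simp add: mm_sum' mm_scale_r mm_scale_l)
      also have "\<dots> = (\<Sum>i\<in>UNIV. \<Sum>j\<in>UNIV. (Z \<bullet> B i j) *\<^sub>R B i j)"
        unfolding conv[of Cold] Z_def ..
      finally show ?thesis using PApP by simp
    qed
    define Cnew where "Cnew = W ** Bm ** W"
    have Cnew_hat: "Pi ** Cnew ** Pi = P ** Bm ** P"
    proof -
      have "Pi ** Cnew ** Pi = (Pi ** P) ** (P ** Bm ** P) ** (P ** Pi)"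
        unfolding Cnew_def PP[symmetric] by (simp add: matrix_mul_assoc)
      also have "\<dots> = P ** Bm ** P" by (simp add: PiP PPi)
      finally show ?thesis .
    qed
    have Bh: "P ** Bm ** P = (\<Sum>i\<in>UNIV. \<Sum>j\<in>UNIV. t i j *\<^sub>R B i j)"
      unfolding Bm B_def by (simp add: mm_sum' mm_scale_r mm_scale_l)
    have psdC: "psd_mat Cnew" unfolding Cnew_def by (rule psd_congr[OF Bmpsd pd_sym[OF Wpd]])
    have lhs: "sqnorm2 (\<lambda>i1 i2. t i1 i2 - Aop C1 C2 Cnew i1 i2)
        = (\<Sum>i\<in>UNIV. \<Sum>j\<in>UNIV. (t i j - (\<Sum>k\<in>UNIV. \<Sum>l\<in>UNIV. t k l *\<^sub>R B k l) \<bullet> B i j)^2)"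
      unfolding sq_eq Aop_eq conv[of Cnew] Cnew_hat Bh ..
    have rhs: "sqnorm2 (\<lambda>i1 i2. t i1 i2 - Aop C1 C2 Cold i1 i2)
        = (\<Sum>i\<in>UNIV. \<Sum>j\<in>UNIV. (t i j - Z \<bullet> B i j)^2)"
      unfolding sq_eq Aop_eq conv[of Cold] Z_def ..
    have ineq: "(\<Sum>i\<in>UNIV. \<Sum>j\<in>UNIV. (t i j - (\<Sum>k\<in>UNIV. \<Sum>l\<in>UNIV. t k l *\<^sub>R B k l) \<bullet> B i j)^2)
        \<le> (\<Sum>i\<in>UNIV. \<Sum>j\<in>UNIV. (t i j - Z \<bullet> B i j)^2)"
      by (rule final_ineq[OF pd_psd[OF Bpd] Zpd fixZ])
    show "let W = gmean (matrix_inv (Aadj C1 C2 (Aop C1 C2 Cold))) Cold;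
           Cnew = W ** Aadj C1 C2 t ** W
       in psd_mat Cnew \<and>
          sqnorm2 (\<lambda>i1 i2. t i1 i2 - Aop C1 C2 Cnew i1 i2)
            \<le> sqnorm2 (\<lambda>i1 i2. t i1 i2 - Aop C1 C2 Cold i1 i2)"
      unfolding Let_def W_eq Bm_def[symmetric] Cnew_def[symmetric] lhs rhs using psdC ineq by simp
  qed
qed

end
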